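(* Let $R$ be a commutative Noetherian ring and $n$ a non-negative integer. The class of $R$-modules that are in dimension $<n$ is a Serre subcategory of the category of $R$-modules, i.e. it is closed under taking submodules, quotients and extensions.
   Context: For an $R$-module $L$, $\dim\operatorname{Supp}L=\sup\{\dim R/\mathfrak p:\mathfrak p\in\operatorname{Supp}L\}$, the zero module having dimension $-\infty$. An $R$-module $L$ is "in dimension $<n$" if there is a finitely generated submodule $N\subseteq L$ with $\dim\operatorname{Supp}(L/N)<n$. *)

theory Defs
  imports Main "HOL-Library.Extended_Real"
begin

definition is_ideal :: "'r::comm_ring_1 set \<Rightarrow> bool" where
  "is_ideal I \<longleftrightarrow> 0 \<in> I \<and> (\<forall>x\<in>I. \<forall>y\<in>I. x + y \<in> I) \<and> (\<forall>r. \<forall>x\<in>I. r * x \<in> I)"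

definition prime_ideal :: "'r::comm_ring_1 set \<Rightarrow> bool" where
  "prime_ideal P \<longleftrightarrow> is_ideal P \<and> P \<noteq> UNIV \<and> (\<forall>a b. a * b \<in> P \<longrightarrow> a \<in> P \<or> b \<in> P)"

definition ideal_gen :: "'r::comm_ring_1 set \<Rightarrow> 'r set" where
  "ideal_gen F = {(\<Sum>a\<in>t. c a * a) | t c. finite t \<and> t \<subseteq> F}"

definition noetherian_ring :: "'r::comm_ring_1 itself \<Rightarrow> bool" where
  "noetherian_ring _ \<longleftrightarrow>
     (\<forall>I :: 'r set. is_ideal I \<longrightarrow> (\<exists>F. finite F \<and> F \<subseteq> I \<and> I = ideal_gen F))"

text \<open>Krull dimension of R/p: supremum of the lengths k of chains
  p = q_0 \<subset> q_1 \<subset> ... \<subset> q_k of prime ideals of R (primes of R/p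
  correspond to primes of R containing p).\<close>
definition dim_quot :: "'r::comm_ring_1 set \<Rightarrow> enat" where
  "dim_quot p = Sup {enat k | k. \<exists>q :: nat \<Rightarrow> 'r set. q 0 = p \<and>
       (\<forall>i\<le>k. prime_ideal (q i)) \<and> (\<forall>i<k. q i \<subset> q (Suc i))}"

text \<open>Support of the quotient module L/N (N a submodule of L): the prime
  ideals p with (L/N)_p \<noteq> 0, i.e. such that some class x + N has annihilator
  {r. r x \<in> N} contained in p.\<close>
definition Supp_quot ::
  "('r::comm_ring_1 \<Rightarrow> 'm::ab_group_add \<Rightarrow> 'm) \<Rightarrow> 'm set \<Rightarrow> 'm set \<Rightarrow> 'r set set" where
  "Supp_quot scale L N = {p. prime_ideal p \<and> (\<exists>x\<in>L. {r. scale r x \<in> N} \<subseteq> p)}"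

text \<open>dim Supp(L/N) = sup of dim R/p over p in Supp(L/N); the empty supremum
  in ereal is -\<infinity> (the zero module).\<close>
definition dim_Supp_quot ::
  "('r::comm_ring_1 \<Rightarrow> 'm::ab_group_add \<Rightarrow> 'm) \<Rightarrow> 'm set \<Rightarrow> 'm set \<Rightarrow> ereal" where
  "dim_Supp_quot scale L N = Sup ((\<lambda>p. ereal_of_enat (dim_quot p)) ` Supp_quot scale L N)"

definition in_dim_less ::
  "('r::comm_ring_1 \<Rightarrow> 'm::ab_group_add \<Rightarrow> 'm) \<Rightarrow> 'm set \<Rightarrow> nat \<Rightarrow> bool" where
  "in_dim_less scale L n \<longleftrightarrow>
     (\<exists>F. finite F \<and> F \<subseteq> L \<and> dim_Supp_quot scale L (module.span scale F) < ereal (real n))"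

definition linear_on ::
  "('r::comm_ring_1 \<Rightarrow> 'm::ab_group_add \<Rightarrow> 'm) \<Rightarrow> ('r \<Rightarrow> 'k::ab_group_add \<Rightarrow> 'k)
     \<Rightarrow> 'm set \<Rightarrow> ('m \<Rightarrow> 'k) \<Rightarrow> bool" where
  "linear_on s1 s2 M f \<longleftrightarrow>
     (\<forall>x\<in>M. \<forall>y\<in>M. f (x + y) = f x + f y) \<and> (\<forall>r. \<forall>x\<in>M. f (s1 r x) = s2 r (f x))"

end

theory Submission
  imports Defs
begin



context module begin

lemma noeth_sub:
  assumes noe: "noetherian_ring TYPE('a)" and fin: "finite F"
  shows "subspace M \<Longrightarrow> M \<subseteq> span F \<Longrightarrow> \<exists>G. finite G \<and> G \<subseteq> M \<and> span G = M"
  using fin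
proof (induction F arbitrary: M rule: finite_induct)
  case empty
  then have "M = {0}" using subspace_0 by auto
  then show ?case by (intro exI[of _ "{}"]) auto
next
  case (insert a F)
  define M0 where "M0 = M \<inter> span F"
  have "subspace M0" unfolding M0_def using insert.prems subspace_inter by blast
  then obtain G0 where G0: "finite G0" "G0 \<subseteq> M0" "span G0 = M0"
    using insert.IH[of M0] unfolding M0_def by blast
  define I where "I = {r. \<exists>x\<in>M. x - r *s a \<in> span F}"
  have "is_ideal I" unfolding is_ideal_def I_def
  proof (intro conjI ballI allI; clarsimp?)
    show "\<exists>x\<in>M. x \<in> span F" using insert.prems subspace_0 span_zero by blast
  next
    fix x y r s assume "x \<in> M" "x - r *s a \<in> span F" "y \<in> M" "y - s *s a \<in> span F"
    then show "\<exists>z\<in>M. z - (r + s) *s a \<in> span F"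
      by (intro bexI[of _ "x+y"]) (auto intro: subspace_add[OF insert.prems(1)] dest: span_add
          simp: algebra_simps)
  next
    fix x r s assume "x \<in> M" "x - s *s a \<in> span F"
    then show "\<exists>z\<in>M. z - (r * s) *s a \<in> span F"
      by (intro bexI[of _ "r *s x"]) (auto intro: subspace_scale[OF insert.prems(1)]
          dest: span_scale[where c=r] simp: algebra_simps)
  qed
  then obtain H where H: "finite H" "H \<subseteq> I" "I = ideal_gen H"
    using noe unfolding noetherian_ring_def by blast
  have "\<forall>h\<in>H. \<exists>m. m \<in> M \<and> m - h *s a \<in> span F" using H(2) unfolding I_def by blast
  then obtain m where m: "\<And>h. h \<in> H \<Longrightarrow> m h \<in> M \<and> m h - h *s a \<in> span F" by metis
  define G where "G = G0 \<union> m ` H"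
  have GM: "G \<subseteq> M" unfolding G_def using G0 m M0_def by auto
  have "M \<subseteq> span G"
  proof
    fix x assume xM: "x \<in> M"
    then obtain k where k: "x - k *s a \<in> span F"
      using insert.prems(2) span_breakdown_eq by blast
    then have "k \<in> I" unfolding I_def using xM by blast
    then obtain t c where tc: "finite t" "t \<subseteq> H" "k = (\<Sum>b\<in>t. c b * b)"
      using H(3) unfolding ideal_gen_def by blast
    define y where "y = x - (\<Sum>b\<in>t. c b *s m b)"
    have "y \<in> M" unfolding y_def using xM tc m
      by (intro subspace_diff[OF insert.prems(1)] subspace_sum[OF insert.prems(1)]
          subspace_scale[OF insert.prems(1)]) auto
    have eq: "y = (x - k *s a) - (\<Sum>b\<in>t. c b *s (m b - b *s a))"
      unfolding y_def tc(3) by (simp add: scale_right_diff_distrib sum_subtractf scale_sum_left)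
    have "(\<Sum>b\<in>t. c b *s (m b - b *s a)) \<in> span F"
      using tc m by (intro span_sum span_scale) auto
    then have "y \<in> span F" using eq k span_diff by simp
    then have "y \<in> span G" using \<open>y \<in> M\<close> G0 M0_def G_def span_mono by blast
    moreover have "(\<Sum>b\<in>t. c b *s m b) \<in> span G"
      using tc by (intro span_sum span_scale span_base) (auto simp: G_def)
    ultimately show "x \<in> span G" using span_add unfolding y_def by fastforce
  qed
  moreover have "span G \<subseteq> M" using GM span_minimal insert.prems(1) by blast
  moreover have "finite G" using G0 H unfolding G_def by auto
  ultimately show ?case using GM by blast
qed

end

lemma dim_mono2:
  assumes "Supp_quot s1 L1 N1 \<subseteq> Supp_quot s2 L2 N2 \<union> Supp_quot s3 L3 N3"
    "dim_Supp_quot s2 L2 N2 < c" "dim_Supp_quot s3 L3 N3 < c"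
  shows "dim_Supp_quot s1 L1 N1 < c"
proof -
  let ?f = "\<lambda>p. ereal_of_enat (dim_quot p)"
  have "dim_Supp_quot s1 L1 N1 \<le> Sup (?f ` (Supp_quot s2 L2 N2 \<union> Supp_quot s3 L3 N3))"
    unfolding dim_Supp_quot_def using assms(1) by (intro SUP_subset_mono) auto
  also have "\<dots> = sup (dim_Supp_quot s2 L2 N2) (dim_Supp_quot s3 L3 N3)"
    unfolding dim_Supp_quot_def by (simp add: SUP_union)
  finally show ?thesis using assms(2,3) by (metis le_less_trans max_less_iff_conj sup_max)
qed

lemma dim_mono1:
  assumes "Supp_quot s1 L1 N1 \<subseteq> Supp_quot s2 L2 N2" "dim_Supp_quot s2 L2 N2 < c"
  shows "dim_Supp_quot s1 L1 N1 < c"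
  using dim_mono2[of s1 L1 N1 s2 L2 N2 s2 L2 N2 c] assms by auto

lemma lin_zero:
  assumes "linear_on s t L g" "module.subspace s L" "module s"
  shows "g 0 = 0"
proof -
  have "0 \<in> L" using assms module.subspace_0 by blast
  then have "g (0 + 0) = g 0 + g 0" using assms(1) unfolding linear_on_def by blast
  then show ?thesis by simp
qed

lemma lin_diff:
  assumes "linear_on s t L g" "module.subspace s L" "module s" "a \<in> L" "b \<in> L"
  shows "g (a - b) = g a - g b"
proof -
  have "a - b \<in> L" using assms module.subspace_diff by blast
  then have "g (a - b + b) = g (a - b) + g b" using assms unfolding linear_on_def by blast
  then show ?thesis by (simp add: algebra_simps)
qed

lemma span_image_sub:
  assumes ms: "module s" and mt: "module t" and lin: "linear_on s t L g"
    and sL: "module.subspace s L" and HL: "H \<subseteq> L"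
  shows "g ` module.span s H \<subseteq> module.span t (g ` H)"
    and "module.span t (g ` H) \<subseteq> g ` module.span s H"
    and "module.span s H \<subseteq> L"
proof -
  show spL: "module.span s H \<subseteq> L" using module.span_minimal[OF ms HL sL] by simp
  have "module.subspace s {x. x \<in> L \<and> g x \<in> module.span t (g ` H)}"
    unfolding module.subspace_def[OF ms]
  proof (intro conjI ballI allI)
    show "0 \<in> {x. x \<in> L \<and> g x \<in> module.span t (g ` H)}"
      using module.subspace_0[OF ms sL] lin_zero[OF lin sL ms] module.span_zero[OF mt] by simp
  next
    fix x y assume "x \<in> {x. x \<in> L \<and> g x \<in> module.span t (g ` H)}" "y \<in> {x. x \<in> L \<and> g x \<in> module.span t (g ` H)}"
    then show "x + y \<in> {x. x \<in> L \<and> g x \<in> module.span t (g ` H)}"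
      using lin module.subspace_add[OF ms sL] module.span_add[OF mt] unfolding linear_on_def by auto
  next
    fix c x assume "x \<in> {x. x \<in> L \<and> g x \<in> module.span t (g ` H)}"
    then show "s c x \<in> {x. x \<in> L \<and> g x \<in> module.span t (g ` H)}"
      using lin module.subspace_scale[OF ms sL] module.span_scale[OF mt] unfolding linear_on_def by auto
  qed
  then have "module.span s H \<subseteq> {x. x \<in> L \<and> g x \<in> module.span t (g ` H)}"
    using HL module.span_superset[OF mt, of "g ` H"] by (intro module.span_minimal[OF ms]) auto
  then show "g ` module.span s H \<subseteq> module.span t (g ` H)" by auto
  have "module.subspace t (g ` module.span s H)"
    unfolding module.subspace_def[OF mt]
  proof (intro conjI ballI allI)
    show "0 \<in> g ` module.span s H"
      using lin_zero[OF lin sL ms] module.span_zero[OF ms] by force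
  next
    fix x y assume "x \<in> g ` module.span s H" "y \<in> g ` module.span s H"
    then obtain a b where ab: "a \<in> module.span s H" "b \<in> module.span s H" "x = g a" "y = g b" by blast
    then have "g (a + b) = x + y" using lin spL unfolding linear_on_def by blast
    then show "x + y \<in> g ` module.span s H" using ab module.span_add[OF ms] by force
  next
    fix c x assume "x \<in> g ` module.span s H"
    then obtain a where a: "a \<in> module.span s H" "x = g a" by blast
    then have "g (s c a) = t c x" using lin spL unfolding linear_on_def by blast
    then show "t c x \<in> g ` module.span s H" using a module.span_scale[OF ms, of a H c] by (metis image_eqI)
  qed
  then show "module.span t (g ` H) \<subseteq> g ` module.span s H"
    using module.span_superset[OF ms, of H] by (intro module.span_minimal[OF mt]) auto
qed


lemma part1:
  assumes noe: "noetherian_ring TYPE('r::comm_ring_1)" and ms: "module (s :: 'r \<Rightarrow> 'a::ab_group_add \<Rightarrow> 'a)"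
    and sL': "module.subspace s L'" and sub: "L' \<subseteq> L" and d: "in_dim_less s L n"
  shows "in_dim_less s L' n"
proof -
  obtain F where F: "finite F" "F \<subseteq> L" "dim_Supp_quot s L (module.span s F) < ereal (real n)"
    using d unfolding in_dim_less_def by blast
  define M where "M = L' \<inter> module.span s F"
  have "module.subspace s M" unfolding M_def
    using module.subspace_inter[OF ms sL' module.subspace_span[OF ms]] .
  then obtain G where G: "finite G" "G \<subseteq> M" "module.span s G = M"
    using module.noeth_sub[OF ms noe F(1), of M] unfolding M_def by blast
  have "Supp_quot s L' (module.span s G) \<subseteq> Supp_quot s L (module.span s F)"
  proof
    fix p assume "p \<in> Supp_quot s L' (module.span s G)"
    then obtain x where x: "prime_ideal p" "x \<in> L'" "{r. s r x \<in> module.span s G} \<subseteq> p"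
      unfolding Supp_quot_def by blast
    have "{r. s r x \<in> module.span s F} \<subseteq> {r. s r x \<in> module.span s G}"
      using G(3) x(2) module.subspace_scale[OF ms sL'] unfolding M_def by auto
    then show "p \<in> Supp_quot s L (module.span s F)"
      unfolding Supp_quot_def using x sub by blast
  qed
  then show ?thesis unfolding in_dim_less_def using G M_def F(3)
    by (intro exI[of _ G]) (auto intro: dim_mono1)
qed

lemma part2:
  assumes ms: "module (s :: 'r::comm_ring_1 \<Rightarrow> 'b::ab_group_add \<Rightarrow> 'b)"
    and mt: "module (t :: 'r \<Rightarrow> 'c::ab_group_add \<Rightarrow> 'c)"
    and sL: "module.subspace s L" and lin: "linear_on s t L g" and im: "g ` L = L''"
    and d: "in_dim_less s L n"
  shows "in_dim_less t L'' n"
proof -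
  obtain F where F: "finite F" "F \<subseteq> L" "dim_Supp_quot s L (module.span s F) < ereal (real n)"
    using d unfolding in_dim_less_def by blast
  note sp = span_image_sub[OF ms mt lin sL F(2)]
  have "Supp_quot t L'' (module.span t (g ` F)) \<subseteq> Supp_quot s L (module.span s F)"
  proof
    fix p assume "p \<in> Supp_quot t L'' (module.span t (g ` F))"
    then obtain y where y: "prime_ideal p" "y \<in> L''" "{r. t r y \<in> module.span t (g ` F)} \<subseteq> p"
      unfolding Supp_quot_def by blast
    then obtain x where x: "x \<in> L" "y = g x" using im by blast
    have "{r. s r x \<in> module.span s F} \<subseteq> {r. t r y \<in> module.span t (g ` F)}"
    proof clarsimp
      fix r assume "s r x \<in> module.span s F"
      then have "g (s r x) \<in> module.span t (g ` F)" using sp(1) by blast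
      then show "t r y \<in> module.span t (g ` F)" using lin x unfolding linear_on_def by simp
    qed
    then show "p \<in> Supp_quot s L (module.span s F)"
      unfolding Supp_quot_def using x y by blast
  qed
  then show ?thesis unfolding in_dim_less_def using F im
    by (intro exI[of _ "g ` F"]) (auto intro: dim_mono1)
qed

lemma part3:
  assumes ms': "module (s' :: 'r::comm_ring_1 \<Rightarrow> 'd::ab_group_add \<Rightarrow> 'd)"
    and ms: "module (s :: 'r \<Rightarrow> 'e::ab_group_add \<Rightarrow> 'e)"
    and ms'': "module (s'' :: 'r \<Rightarrow> 'f::ab_group_add \<Rightarrow> 'f)"
    and sL': "module.subspace s' L'" and sL: "module.subspace s L"
    and linf: "linear_on s' s L' f" and ling: "linear_on s s'' L g"
    and ker: "f ` L' = {x \<in> L. g x = 0}" and im: "g ` L = L''"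
    and d': "in_dim_less s' L' n" and d'': "in_dim_less s'' L'' n"
  shows "in_dim_less s L n"
proof -
  obtain F' where F': "finite F'" "F' \<subseteq> L'" "dim_Supp_quot s' L' (module.span s' F') < ereal (real n)"
    using d' unfolding in_dim_less_def by blast
  obtain F'' where F'': "finite F''" "F'' \<subseteq> L''" "dim_Supp_quot s'' L'' (module.span s'' F'') < ereal (real n)"
    using d'' unfolding in_dim_less_def by blast
  have "\<forall>z\<in>F''. \<exists>w. w \<in> L \<and> g w = z" using F''(2) im by blast
  then obtain h where h: "\<And>z. z \<in> F'' \<Longrightarrow> h z \<in> L \<and> g (h z) = z" by metis
  define F where "F = f ` F' \<union> h ` F''"
  have fL: "f ` L' \<subseteq> L" using ker by blast
  have FL: "F \<subseteq> L" unfolding F_def using h F'(2) fL by auto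
  have hL: "h ` F'' \<subseteq> L" using h by auto
  note spf = span_image_sub[OF ms' ms linf sL' F'(2)]
  note spg = span_image_sub[OF ms ms'' ling sL hL]
  have ghF: "g ` h ` F'' = F''" unfolding image_image using h by simp
  have "Supp_quot s L (module.span s F) \<subseteq>
        Supp_quot s' L' (module.span s' F') \<union> Supp_quot s'' L'' (module.span s'' F'')"
  proof
    fix p assume "p \<in> Supp_quot s L (module.span s F)"
    then obtain x where x: "prime_ideal p" "x \<in> L" "{r. s r x \<in> module.span s F} \<subseteq> p"
      unfolding Supp_quot_def by blast
    show "p \<in> Supp_quot s' L' (module.span s' F') \<union> Supp_quot s'' L'' (module.span s'' F'')"
    proof (rule ccontr)
      assume nt: "\<not> ?thesis"
      then have n1: "\<not> {r. s' r y \<in> module.span s' F'} \<subseteq> p" if "y \<in> L'" for y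
        using that x(1) unfolding Supp_quot_def by blast
      have n2: "\<not> {r. s'' r z \<in> module.span s'' F''} \<subseteq> p" if "z \<in> L''" for z
        using that x(1) nt unfolding Supp_quot_def by blast
      have "g x \<in> L''" using x(2) im by blast
      then obtain r where r: "r \<notin> p" "s'' r (g x) \<in> module.span s'' F''" using n2 by blast
      have sxL: "s r x \<in> L" using module.subspace_scale[OF ms sL x(2)] .
      have "g (s r x) \<in> module.span s'' (g ` h ` F'')"
        using r ling x(2) ghF unfolding linear_on_def by simp
      then have "g (s r x) \<in> g ` module.span s (h ` F'')" using spg(2) by (rule rev_subsetD)
      then obtain w where w0: "w \<in> module.span s (h ` F'')" "g (s r x) = g w" by (rule imageE)
      have w: "w \<in> module.span s (h ` F'')" "g w = g (s r x)" using w0 by simp_all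
      have wL: "w \<in> L" using w(1) spg(3) by blast
      have "s r x - w \<in> L" using module.subspace_diff[OF ms sL sxL wL] .
      moreover have "g (s r x - w) = 0" using lin_diff[OF ling sL ms sxL wL] w(2) by simp
      ultimately have "s r x - w \<in> f ` L'" unfolding ker by blast
      then obtain y where y: "y \<in> L'" "f y = s r x - w" by (metis imageE)
      obtain r' where r': "r' \<notin> p" "s' r' y \<in> module.span s' F'" using n1[OF y(1)] by blast
      have "f (s' r' y) \<in> module.span s (f ` F')" using spf(1) r'(2) by blast
      moreover have "f (s' r' y) = s r' (f y)" using linf y(1) unfolding linear_on_def by blast
      moreover have "module.span s (f ` F') \<subseteq> module.span s F"
        using module.span_mono[OF ms, of "f ` F'" F] unfolding F_def by blast
      ultimately have a1: "s r' (f y) \<in> module.span s F" by auto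
      have "module.span s (h ` F'') \<subseteq> module.span s F"
        using module.span_mono[OF ms, of "h ` F''" F] unfolding F_def by blast
      then have a2: "s r' w \<in> module.span s F"
        using module.span_scale[OF ms, of w "h ` F''" r'] w(1) by blast
      have "s (r' * r) x = s r' (f y) + s r' w"
      proof -
        have "s r x = f y + w" using y(2) by simp
        then have "s r' (s r x) = s r' (f y) + s r' w" using module.scale_right_distrib[OF ms] by simp
        then show ?thesis using module.scale_scale[OF ms, of r' r x] by simp
      qed
      then have "s (r' * r) x \<in> module.span s F" using a1 a2 module.span_add[OF ms] by simp
      then have "r' * r \<in> p" using x(3) by blast
      moreover have "\<forall>a b. a * b \<in> p \<longrightarrow> a \<in> p \<or> b \<in> p" using x(1) unfolding prime_ideal_def by blast
      ultimately show False using r(1) r'(1) by blast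
    qed
  qed
  then have "dim_Supp_quot s L (module.span s F) < ereal (real n)"
    by (rule dim_mono2[OF _ F'(3) F''(3)])
  moreover have "finite F" unfolding F_def using F'(1) F''(1) by blast
  ultimately show ?thesis unfolding in_dim_less_def using FL by blast
qed


theorem corollary2p13:
  fixes n :: nat
  assumes "noetherian_ring TYPE('r::comm_ring_1)"
  shows
    \<comment> \<open>closed under submodules\<close>
    "(\<forall>(s :: 'r \<Rightarrow> 'a::ab_group_add \<Rightarrow> 'a) L L'.
        module s \<and> module.subspace s L \<and> module.subspace s L' \<and> L' \<subseteq> L \<and>
        in_dim_less s L n \<longrightarrow> in_dim_less s L' n)
   \<and> \<comment> \<open>closed under quotients (surjective R-linear images)\<close>
     (\<forall>(s :: 'r \<Rightarrow> 'b::ab_group_add \<Rightarrow> 'b) (t :: 'r \<Rightarrow> 'c::ab_group_add \<Rightarrow> 'c) L L'' g.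
        module s \<and> module t \<and> module.subspace s L \<and> module.subspace t L'' \<and>
        linear_on s t L g \<and> g ` L = L'' \<and> in_dim_less s L n \<longrightarrow> in_dim_less t L'' n)
   \<and> \<comment> \<open>closed under extensions: 0 \<rightarrow> L' \<rightarrow> L \<rightarrow> L'' \<rightarrow> 0 exact\<close>
     (\<forall>(s' :: 'r \<Rightarrow> 'd::ab_group_add \<Rightarrow> 'd) (s :: 'r \<Rightarrow> 'e::ab_group_add \<Rightarrow> 'e)
        (s'' :: 'r \<Rightarrow> 'f::ab_group_add \<Rightarrow> 'f) L' L L'' f g.
        module s' \<and> module s \<and> module s'' \<and>
        module.subspace s' L' \<and> module.subspace s L \<and> module.subspace s'' L'' \<and>
        linear_on s' s L' f \<and> linear_on s s'' L g \<and>
        inj_on f L' \<and> f ` L' = {x \<in> L. g x = 0} \<and> g ` L = L'' \<and>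
        in_dim_less s' L' n \<and> in_dim_less s'' L'' n \<longrightarrow> in_dim_less s L n)"
proof (intro conjI allI impI)
  fix s :: "'r \<Rightarrow> 'a \<Rightarrow> 'a" and L L'
  assume h: "module s \<and> module.subspace s L \<and> module.subspace s L' \<and> L' \<subseteq> L \<and> in_dim_less s L n"
  show "in_dim_less s L' n" using part1[OF assms] h by meson
next
  fix s :: "'r \<Rightarrow> 'b \<Rightarrow> 'b" and t :: "'r \<Rightarrow> 'c \<Rightarrow> 'c" and L L'' g
  assume "module s \<and> module t \<and> module.subspace s L \<and> module.subspace t L'' \<and>
        linear_on s t L g \<and> g ` L = L'' \<and> in_dim_less s L n"
  then show "in_dim_less t L'' n" by (meson part2)
next
  fix s' :: "'r \<Rightarrow> 'd \<Rightarrow> 'd" and s :: "'r \<Rightarrow> 'e \<Rightarrow> 'e" and s'' :: "'r \<Rightarrow> 'f \<Rightarrow> 'f" and L' L L'' f g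
  assume "module s' \<and> module s \<and> module s'' \<and>
        module.subspace s' L' \<and> module.subspace s L \<and> module.subspace s'' L'' \<and>
        linear_on s' s L' f \<and> linear_on s s'' L g \<and>
        inj_on f L' \<and> f ` L' = {x \<in> L. g x = 0} \<and> g ` L = L'' \<and>
        in_dim_less s' L' n \<and> in_dim_less s'' L'' n"
  then show "in_dim_less s L n" by (elim conjE) (rule part3; assumption)
qed

end
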